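(* Let $(L,\vee,\wedge,0,1)$ be a complemented modular lattice with $0\ne1$ and $a,b,c\in L$. Then $a\odot b\le\{c\}$ if and only if $\{a\}\le b\to c$.
   Context: For $a\in L$, $a^+:=\{x\in L\mid a\vee x=1,\ a\wedge x=0\}$ (the set of all complements of $a$). Define $a\odot b:=\{b\wedge(a\vee x)\mid x\in b^+\}$ and $a\to b:=\{x\vee(a\wedge b)\mid x\in a^+\}$. For $A,B\subseteq L$, $A\le B$ means $x\le y$ for all $x\in A$ and all $y\in B$. *)

theory Defs
  imports Main
begin

definition modular_lattice :: "'a::bounded_lattice itself \<Rightarrow> bool" where
  "modular_lattice _ \<longleftrightarrow> (\<forall>x y z::'a. x \<le> z \<longrightarrow> sup x (inf y z) = inf (sup x y) z)"

definition complements :: "'a::bounded_lattice \<Rightarrow> 'a set" where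
  "complements a = {x. sup a x = top \<and> inf a x = bot}"

definition complemented_lattice :: "'a::bounded_lattice itself \<Rightarrow> bool" where
  "complemented_lattice _ \<longleftrightarrow> (\<forall>a::'a. complements a \<noteq> {})"

definition odot :: "'a::bounded_lattice \<Rightarrow> 'a \<Rightarrow> 'a set" where
  "odot a b = {inf b (sup a x) | x. x \<in> complements b}"

definition arrow :: "'a::bounded_lattice \<Rightarrow> 'a \<Rightarrow> 'a set" where
  "arrow a b = {sup x (inf a b) | x. x \<in> complements a}"

definition set_le :: "'a::order set \<Rightarrow> 'a set \<Rightarrow> bool" where
  "set_le A B \<longleftrightarrow> (\<forall>x\<in>A. \<forall>y\<in>B. x \<le> y)"

end

theory Submission
  imports Defs
begin

theorem theorem5:
  fixes a b c :: "'a::bounded_lattice"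
  assumes "modular_lattice TYPE('a)"
    and "complemented_lattice TYPE('a)"
    and "(bot::'a) \<noteq> top"
  shows "set_le (odot a b) {c} \<longleftrightarrow> set_le {a} (arrow b c)"
proof -
  have M: "\<And>x y z::'a. x \<le> z \<Longrightarrow> sup x (inf y z) = inf (sup x y) z"
    using assms(1) unfolding modular_lattice_def by blast
  show ?thesis
  proof
    assume H: "set_le (odot a b) {c}"
    show "set_le {a} (arrow b c)"
      unfolding set_le_def arrow_def
    proof (intro ballI, clarsimp)
      fix y assume y: "y \<in> complements b"
      then have yb: "sup b y = top" "inf b y = bot" by (auto simp: complements_def)
      have "inf b (sup a y) \<in> odot a b" using y unfolding odot_def by blast
      then have "inf b (sup a y) \<le> c" using H unfolding set_le_def by blast
      then have hc: "inf b (sup a y) \<le> inf b c" by (simp add: le_infI2)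
      have "sup y (inf b (sup a y)) = inf (sup y b) (sup a y)"
        by (rule M) simp
      also have "\<dots> = sup a y" using yb by (simp add: sup_commute)
      finally have "a \<le> sup y (inf b (sup a y))" by simp
      also have "\<dots> \<le> sup y (inf b c)" using hc sup_mono by blast
      finally show "a \<le> sup y (inf b c)" .
    qed
  next
    assume H: "set_le {a} (arrow b c)"
    show "set_le (odot a b) {c}"
      unfolding set_le_def odot_def
    proof (intro ballI, clarsimp)
      fix x assume x: "x \<in> complements b"
      then have xb: "sup b x = top" "inf b x = bot" by (auto simp: complements_def)
      have "sup x (inf b c) \<in> arrow b c" using x unfolding arrow_def by blast
      then have "a \<le> sup x (inf b c)" using H unfolding set_le_def by blast
      then have "sup a x \<le> sup x (inf b c)" by simp
      then have "inf b (sup a x) \<le> inf b (sup (inf b c) x)" by (simp add: le_infI2 sup_commute)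
      also have "inf b (sup (inf b c) x) = sup (inf b c) (inf x b)"
        using M[of "inf b c" b x] by (simp add: inf_commute)
      also have "\<dots> = inf b c" using xb by (simp add: inf_commute)
      finally show "inf b (sup a x) \<le> c" by simp
    qed
  qed
qed

end
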